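(* Let $G_{\|v_0}$ be an initialized mean-payoff game, let $i\in\Pi$, and let $\lambda$ be a requirement with either $\lambda(V)\subseteq\mathbb{R}$ or $\lambda=\lambda_0$. Then $$\inf_{\tau_\mathbb{P}}\ \sup_{\tau_\mathbb{C}}\ \nu_\mathbb{C}\big(\langle\tau_\mathbb{P},\tau_\mathbb{C}\rangle_{s_0}\big)=\inf_{\bar\sigma_{-i}\in\lambda\mathrm{Rat}_i(v_0)}\ \sup_{\sigma_i}\ \mu_i\big(\langle\bar\sigma_{-i},\sigma_i\rangle_{v_0}\big),$$ where the left-hand side is the value $\mathrm{val}_\mathbb{C}(\mathrm{Conc}_{\lambda i}(G)_{\|s_0})$ of the concrete negotiation game.
   Context: A game is a tuple $G=(\Pi,V,(V_i)_{i\in\Pi},E,\mu)$ with $\Pi$ a finite set of players, $(V,E)$ a finite directed graph in which every vertex has an outgoing edge, $(V_i)_i$ a partition of $V$, and $\mu:V^\omega\to\mathbb{R}^\Pi$. Plays, histories, strategies, profiles, compatibility, $\langle\bar\sigma\rangle_v$ and $\bar\sigma_{\|hw}$ ($\sigma_{j\|hw}(h')=\sigma_j(hh')$) are as usual; $-i=\Pi\setminus\{i\}$. A mean-payoff game is a game where $\mu$ is given by a weight function $\pi:E\to\mathbb{Q}^\Pi$ via $\mu_j(\rho)=\liminf_{n\to\infty}\frac1n\sum_{k=0}^{n-1}\pi_j(\rho_k\rho_{k+1})$. A requirement is a map $\lambda:V\to\mathbb{R}\cup\{\pm\infty\}$; $\lambda_0$ is constantly $-\infty$. A play $\rho$ is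 $\lambda$-consistent if for every $j\in\Pi$ and $n$ with $\rho_n\in V_j$, $\mu_j(\rho_n\rho_{n+1}\cdots)\ge\lambda(\rho_n)$. $\lambda\mathrm{Rat}_i(v)$ is the set of profiles $\bar\sigma_{-i}$ in $G_{\|v}$ for which there exists $\sigma_i$ such that for every history $hw$ from $v$ compatible with $\bar\sigma_{-i}$, $\langle\bar\sigma_{\|hw}\rangle_w$ is $\lambda$-consistent; $\inf\emptyset=+\infty$. The concrete negotiation game $\mathrm{Conc}_{\lambda i}(G)_{\|s_0}$ is the two-player zero-sum game between Prover $\mathbb{P}$ and Challenger $\mathbb{C}$ with Prover states $S_\mathbb{P}=V\times2^V$, Challenger states $S_\mathbb{C}=E\times2^V$, initial state $s_0=(v_0,\{v_0\})$, and transitions: proposals $(v,M)\to(vw,M)$ for $vw\in E$; acceptations $(vw,M)\to(w,M\cup\{w\})$; deviations $(uv,M)\to(w,\{w\})$ whenever $u\in V_i$, $uw\in E$, $w\neq v$. The weight function $\hat\pi$ has coordinates indexed by $\Pi\cup\{\star\}$: on proposals all coordinates are $0$; on an acceptation or deviation $(uv,M)\to(w,N)$, $\hat\pi_\star=2\pi_i(uw)$ and, for $j\in\Pi$, $\hat\pi_j=2\big(\pi_j(uw)-\max_{x\in M\cap V_j}\lambda(x)\big)$, with the convention that $\hat\pi_j=0$ when $M\cap V_j=\emptyset$ or this maximum is $-\infty$. For each coordinate $d$, $\hat\mu_d(\eta)=\liminf_n\frac1n\sum_{k<n}\hat\pi_d(\eta_k\eta_{k+1})$. Challenger's outcome is $\nu_\mathbb{C}(\eta)=+\infty$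 if $\eta$ contains only finitely many deviations and $\hat\mu_j(\eta)<0$ for some $j\in\Pi$, and $\nu_\mathbb{C}(\eta)=\hat\mu_\star(\eta)$ otherwise; $\nu_\mathbb{P}=-\nu_\mathbb{C}$. $\langle\tau_\mathbb{P},\tau_\mathbb{C}\rangle_{s_0}$ is the play generated by strategies of Prover and Challenger. The game is determined, so $\mathrm{val}_\mathbb{C}=\inf_{\tau_\mathbb{P}}\sup_{\tau_\mathbb{C}}\nu_\mathbb{C}=\sup_{\tau_\mathbb{C}}\inf_{\tau_\mathbb{P}}\nu_\mathbb{C}$. *)

theory Defs
  imports Complex_Main "HOL-Library.Extended_Real"
begin

(* A game: vertex type 'v (finite, V = UNIV), player type 'p (finite, Pi = UNIV),
   edge relation E, owner function own (V_j = {v. own v = j}),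
   weight function wt j u w = pi_j(uw). *)

definition is_strategy :: "('v \<times> 'v) set \<Rightarrow> ('v \<Rightarrow> 'p) \<Rightarrow> 'p \<Rightarrow> ('v list \<Rightarrow> 'v) \<Rightarrow> bool" where
  "is_strategy E own j \<sigma> \<longleftrightarrow> (\<forall>h. h \<noteq> [] \<and> own (last h) = j \<longrightarrow> (last h, \<sigma> h) \<in> E)"

fun hist :: "('v \<Rightarrow> 'p) \<Rightarrow> ('p \<Rightarrow> 'v list \<Rightarrow> 'v) \<Rightarrow> 'v \<Rightarrow> nat \<Rightarrow> 'v list" where
  "hist own \<sigma> v 0 = [v]"
| "hist own \<sigma> v (Suc n) = (let h = hist own \<sigma> v n in h @ [\<sigma> (own (last h)) h])"

definition outcome :: "('v \<Rightarrow> 'p) \<Rightarrow> ('p \<Rightarrow> 'v list \<Rightarrow> 'v) \<Rightarrow> 'v \<Rightarrow> nat \<Rightarrow> 'v" where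
  "outcome own \<sigma> v = (\<lambda>n. last (hist own \<sigma> v n))"

definition mean_payoff :: "('a \<Rightarrow> 'a \<Rightarrow> real) \<Rightarrow> (nat \<Rightarrow> 'a) \<Rightarrow> ereal" where
  "mean_payoff w \<rho> = liminf (\<lambda>n. ereal ((\<Sum>k<n. w (\<rho> k) (\<rho> (Suc k))) / real n))"

definition lam_consistent :: "('v \<Rightarrow> 'p) \<Rightarrow> ('p \<Rightarrow> 'v \<Rightarrow> 'v \<Rightarrow> real) \<Rightarrow> ('v \<Rightarrow> ereal) \<Rightarrow> (nat \<Rightarrow> 'v) \<Rightarrow> bool" where
  "lam_consistent own wt lam \<rho> \<longleftrightarrow>
     (\<forall>n. mean_payoff (wt (own (\<rho> n))) (\<lambda>k. \<rho> (n + k)) \<ge> lam (\<rho> n))"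

definition is_history :: "('v \<times> 'v) set \<Rightarrow> 'v \<Rightarrow> 'v list \<Rightarrow> bool" where
  "is_history E v h \<longleftrightarrow> h \<noteq> [] \<and> hd h = v \<and> (\<forall>k. Suc k < length h \<longrightarrow> (h ! k, h ! Suc k) \<in> E)"

definition compatible_minus :: "('v \<Rightarrow> 'p) \<Rightarrow> 'p \<Rightarrow> ('p \<Rightarrow> 'v list \<Rightarrow> 'v) \<Rightarrow> 'v list \<Rightarrow> bool" where
  "compatible_minus own i \<sigma> h \<longleftrightarrow>
     (\<forall>k. Suc k < length h \<and> own (h ! k) \<noteq> i \<longrightarrow> h ! Suc k = \<sigma> (own (h ! k)) (take (Suc k) h))"

(* \<lambda>Rat_i(v): profiles \<sigma>_{-i} (represented as full profiles whose i-th component is ignored) *)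
definition lamRat :: "('v \<times> 'v) set \<Rightarrow> ('v \<Rightarrow> 'p) \<Rightarrow> ('p \<Rightarrow> 'v \<Rightarrow> 'v \<Rightarrow> real) \<Rightarrow> ('v \<Rightarrow> ereal)
      \<Rightarrow> 'p \<Rightarrow> 'v \<Rightarrow> ('p \<Rightarrow> 'v list \<Rightarrow> 'v) set" where
  "lamRat E own wt lam i v = {\<sigma>. (\<forall>j. j \<noteq> i \<longrightarrow> is_strategy E own j (\<sigma> j)) \<and>
     (\<exists>\<tau>. is_strategy E own i \<tau> \<and>
        (\<forall>h w. is_history E v (h @ [w]) \<and> compatible_minus own i \<sigma> (h @ [w]) \<longrightarrow>
           lam_consistent own wt lam (outcome own (\<lambda>j h'. (\<sigma>(i := \<tau>)) j (h @ h')) w)))}"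

datatype 'v cstate = PSt 'v "'v set" | CSt 'v 'v "'v set"

fun is_P :: "'v cstate \<Rightarrow> bool" where
  "is_P (PSt _ _) = True"
| "is_P (CSt _ _ _) = False"

fun ctrans :: "('v \<times> 'v) set \<Rightarrow> ('v \<Rightarrow> 'p) \<Rightarrow> 'p \<Rightarrow> 'v cstate \<Rightarrow> 'v cstate \<Rightarrow> bool" where
  "ctrans E own i (PSt v M) s' = (\<exists>w. (v, w) \<in> E \<and> s' = CSt v w M)"
| "ctrans E own i (CSt u v M) s' =
     (s' = PSt v (M \<union> {v}) \<or> (\<exists>w. own u = i \<and> (u, w) \<in> E \<and> w \<noteq> v \<and> s' = PSt w {w}))"

fun is_dev :: "'v cstate \<Rightarrow> 'v cstate \<Rightarrow> bool" where
  "is_dev (CSt u v M) (PSt w N) = (w \<noteq> v)"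
| "is_dev _ _ = False"

(* coordinate None is \<star>, Some j is player j *)
fun hatwt :: "('v \<Rightarrow> 'p) \<Rightarrow> ('p \<Rightarrow> 'v \<Rightarrow> 'v \<Rightarrow> real) \<Rightarrow> ('v \<Rightarrow> ereal) \<Rightarrow> 'p
      \<Rightarrow> 'p option \<Rightarrow> 'v cstate \<Rightarrow> 'v cstate \<Rightarrow> real" where
  "hatwt own wt lam i None (CSt u v M) (PSt w N) = 2 * wt i u w"
| "hatwt own wt lam i (Some j) (CSt u v M) (PSt w N) =
     (let X = M \<inter> {x. own x = j} in
      if X = {} \<or> Max (lam ` X) = -\<infinity> then 0
      else 2 * (wt j u w - real_of_ereal (Max (lam ` X))))"
| "hatwt own wt lam i d _ _ = 0"

definition nuC :: "('v \<Rightarrow> 'p) \<Rightarrow> ('p \<Rightarrow> 'v \<Rightarrow> 'v \<Rightarrow> real) \<Rightarrow> ('v \<Rightarrow> ereal) \<Rightarrow> 'p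
      \<Rightarrow> (nat \<Rightarrow> 'v cstate) \<Rightarrow> ereal" where
  "nuC own wt lam i \<eta> =
     (if finite {k. is_dev (\<eta> k) (\<eta> (Suc k))} \<and>
         (\<exists>j. mean_payoff (hatwt own wt lam i (Some j)) \<eta> < 0)
      then \<infinity> else mean_payoff (hatwt own wt lam i None) \<eta>)"

definition prover_strategy :: "('v \<times> 'v) set \<Rightarrow> ('v \<Rightarrow> 'p) \<Rightarrow> 'p \<Rightarrow> ('v cstate list \<Rightarrow> 'v cstate) \<Rightarrow> bool" where
  "prover_strategy E own i \<tau> \<longleftrightarrow> (\<forall>h. h \<noteq> [] \<and> is_P (last h) \<longrightarrow> ctrans E own i (last h) (\<tau> h))"

definition challenger_strategy :: "('v \<times> 'v) set \<Rightarrow> ('v \<Rightarrow> 'p) \<Rightarrow> 'p \<Rightarrow> ('v cstate list \<Rightarrow> 'v cstate) \<Rightarrow> bool" where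
  "challenger_strategy E own i \<tau> \<longleftrightarrow> (\<forall>h. h \<noteq> [] \<and> \<not> is_P (last h) \<longrightarrow> ctrans E own i (last h) (\<tau> h))"

fun chist :: "('v cstate list \<Rightarrow> 'v cstate) \<Rightarrow> ('v cstate list \<Rightarrow> 'v cstate) \<Rightarrow> 'v cstate \<Rightarrow> nat \<Rightarrow> 'v cstate list" where
  "chist tP tC s 0 = [s]"
| "chist tP tC s (Suc n) = (let h = chist tP tC s n in h @ [if is_P (last h) then tP h else tC h])"

definition coutcome :: "('v cstate list \<Rightarrow> 'v cstate) \<Rightarrow> ('v cstate list \<Rightarrow> 'v cstate) \<Rightarrow> 'v cstate \<Rightarrow> nat \<Rightarrow> 'v cstate" where
  "coutcome tP tC s = (\<lambda>n. last (chist tP tC s n))"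

end

theory Submission
  imports Defs "HOL-Analysis.Analysis"
begin


definition avg :: "(nat \<Rightarrow> real) \<Rightarrow> ereal" where
  "avg a = liminf (\<lambda>n. ereal ((\<Sum>k<n. a k) / real n))"

lemma mean_payoff_avg: "mean_payoff w \<rho> = avg (\<lambda>k. w (\<rho> k) (\<rho> (Suc k)))"
  by (simp add: mean_payoff_def avg_def)

lemma liminf_diff0:
  fixes x z :: "nat \<Rightarrow> real"
  assumes "(\<lambda>n. x n - z n) \<longlonglongrightarrow> 0"
  shows "liminf (\<lambda>n. ereal (x n)) = liminf (\<lambda>n. ereal (z n))"
proof -
  have t: "(\<lambda>n. ereal (x n - z n)) \<longlonglongrightarrow> ereal 0"
    using assms by (simp add: tendsto_ereal)
  have "liminf (\<lambda>n. ereal (x n - z n) + ereal (z n)) = ereal 0 + liminf (\<lambda>n. ereal (z n))"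
    by (rule ereal_liminf_lim_add[OF t]) simp
  then show ?thesis by simp
qed

lemma tendsto0_bound:
  fixes x :: "nat \<Rightarrow> real"
  assumes "\<And>n. n \<ge> 1 \<Longrightarrow> \<bar>x n\<bar> \<le> C / real n"
  shows "x \<longlonglongrightarrow> 0"
proof -
  have c: "(\<lambda>n. C / real n) \<longlonglongrightarrow> 0"
    by (rule lim_const_over_n)
  show ?thesis
  proof (rule Lim_null_comparison[OF _ c])
    show "\<forall>\<^sub>F n in sequentially. norm (x n) \<le> C / real n"
      using assms by (auto simp: eventually_sequentially intro!: exI[of _ 1])
  qed
qed

lemma liminf_div2:
  fixes f :: "nat \<Rightarrow> ereal"
  shows "liminf (\<lambda>m. f (m div 2)) = liminf f"
proof (rule antisym)
  have "strict_mono (\<lambda>n::nat. 2 * n)" by (auto simp: strict_mono_def)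
  from liminf_subseq_mono[OF this, of "\<lambda>m. f (m div 2)"]
  show "liminf (\<lambda>m. f (m div 2)) \<le> liminf f" by (simp add: o_def)
next
  show "liminf f \<le> liminf (\<lambda>m. f (m div 2))"
    unfolding le_Liminf_iff
  proof (intro allI impI)
    fix y assume "y < liminf f"
    then have "\<forall>\<^sub>F n in sequentially. y < f n" using less_LiminfD by blast
    then obtain N where N: "\<And>n. n \<ge> N \<Longrightarrow> y < f n" by (auto simp: eventually_sequentially)
    show "\<forall>\<^sub>F m in sequentially. y < f (m div 2)"
      unfolding eventually_sequentially
      by (rule exI[of _ "2*N"]) (auto intro!: N)
  qed
qed

lemma sum_bound:
  fixes a :: "nat \<Rightarrow> real"
  assumes "\<And>n. \<bar>a n\<bar> \<le> B"
  shows "\<bar>\<Sum>k<n. a k\<bar> \<le> B * real n"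
proof -
  have "\<bar>\<Sum>k<n. a k\<bar> \<le> (\<Sum>k<n. \<bar>a k\<bar>)" by (rule sum_abs)
  also have "\<dots> \<le> (\<Sum>k<n. B)" by (rule sum_mono) (use assms in auto)
  finally show ?thesis by (simp add: mult.commute)
qed

lemma avg_interleave:
  fixes a b :: "nat \<Rightarrow> real"
  assumes b0: "\<And>n. b (2*n) = 0" and b1: "\<And>n. b (Suc (2*n)) = 2 * a n"
    and B: "\<And>n. \<bar>a n\<bar> \<le> B"
  shows "avg b = avg a"
proof -
  define S where "S n = (\<Sum>k<n. a k)" for n
  have Sb0: "(\<Sum>k<2*n. b k) = 2 * S n" for n
    by (induction n) (auto simp: S_def b0 b1)
  have Sb1: "(\<Sum>k<Suc (2*n). b k) = 2 * S n" for n
    using Sb0[of n] by (simp add: b0)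
  have SB: "\<bar>S n\<bar> \<le> B * real n" for n unfolding S_def by (rule sum_bound[OF B])
  have B0: "B \<ge> 0" using B[of 0] by linarith
  define x where "x m = (\<Sum>k<m. b k) / real m" for m
  define z where "z m = S (m div 2) / real (m div 2)" for m
  have "(\<lambda>m. x m - z m) \<longlonglongrightarrow> 0"
  proof (rule tendsto0_bound)
    fix m :: nat assume "m \<ge> 1"
    show "\<bar>x m - z m\<bar> \<le> B / real m"
    proof (cases "even m")
      case True
      then obtain n where m: "m = 2*n" by auto
      then show ?thesis using B0 \<open>m\<ge>1\<close> by (simp add: x_def z_def Sb0)
    next
      case False
      define n where "n = m div 2"
      have m: "m = Suc (2*n)" using False unfolding n_def by presburger
      have md: "m div 2 = n" using m by simp
      show ?thesis
      proof (cases "n = 0")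
        case True then show ?thesis using m B0 using b0[of 0] by (simp add: x_def z_def S_def)
      next
        case False
        have xm: "x m = 2 * S n / (2*n+1)" unfolding x_def m Sb1 by simp
        have "x m - z m = 2 * S n / (2*n+1) - S n / n" using md by (simp add: xm z_def)
        also have "\<dots> = - S n / (n * (2*n+1))" using False by (simp add: field_simps)
        finally have "\<bar>x m - z m\<bar> = \<bar>S n\<bar> / (n * (2*n+1))" by simp
        also have "\<dots> \<le> B * n / (n * (2*n+1))"
          by (rule divide_right_mono[OF SB]) simp
        also have "\<dots> = B / m"
        proof -
          have "real n \<noteq> 0" "2 * real n + 1 \<noteq> 0" using False by auto
          have "B * real n / real (n * (2*n+1)) = (B * real n) / (real (2*n+1) * real n)"
            by (simp only: of_nat_mult mult.commute)
          also have "\<dots> = B / real (2*n+1)"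
            by (rule nonzero_mult_divide_mult_cancel_right) fact
          finally have "B * real n / real (n * (2*n+1)) = B / real (2*n+1)" .
          then show ?thesis using m by simp
        qed
        finally show ?thesis .
      qed
    qed
  qed
  then have "liminf (\<lambda>m. ereal (x m)) = liminf (\<lambda>m. ereal (z m))" by (rule liminf_diff0)
  also have "\<dots> = liminf (\<lambda>m. (\<lambda>n. ereal (S n / real n)) (m div 2))" by (simp add: z_def)
  also have "\<dots> = liminf (\<lambda>n. ereal (S n / real n))" by (rule liminf_div2)
  finally show ?thesis by (simp add: avg_def x_def S_def)
qed

lemma avg_shift:
  fixes a :: "nat \<Rightarrow> real"
  assumes B: "\<And>n. \<bar>a n\<bar> \<le> B"
  shows "avg (\<lambda>k. a (m + k)) = avg a"
proof -
  define S where "S n = (\<Sum>k<n. a k)" for n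
  have SB: "\<bar>S n\<bar> \<le> B * real n" for n unfolding S_def by (rule sum_bound[OF B])
  have B0: "B \<ge> 0" using B[of 0] by linarith
  have Sh: "(\<Sum>k<n. a (m + k)) = S (n + m) - S m" for n
  proof -
    have "S (m + n) = S m + (\<Sum>k<n. a (m + k))" unfolding S_def
      by (induction n) auto
    then show ?thesis by (simp add: add.commute)
  qed
  define x where "x n = (S (n + m) - S m) / real n" for n
  define z where "z n = S (n + m) / real (n + m)" for n
  have "(\<lambda>n. x n - z n) \<longlonglongrightarrow> 0"
  proof (rule tendsto0_bound)
    fix n :: nat assume n1: "n \<ge> 1"
    have nn: "real n > 0" using n1 by simp
    have "x n - z n = S (n+m) * (1 / n - 1 / (n+m)) - S m / n"
      by (simp add: x_def z_def diff_divide_distrib algebra_simps)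
    also have "1 / real n - 1 / (n+m) = m / (n * (n+m))"
      using nn by (simp add: field_simps)
    finally have xz: "x n - z n = S (n+m) * m / (n * (n+m)) - S m / n" by simp
    then have "\<bar>x n - z n\<bar> \<le> \<bar>S (n+m)\<bar> * m / (n * (n+m)) + \<bar>S m\<bar> / n"
    proof -
      have e1: "\<bar>S (n+m) * m / (n * (n+m))\<bar> = \<bar>S (n+m)\<bar> * m / (n * (n+m))"
        by (simp add: abs_mult)
      have e2: "\<bar>S m / n\<bar> = \<bar>S m\<bar> / n" by simp
      show ?thesis unfolding xz using abs_triangle_ineq4[of "S (n+m) * m / (n * (n+m))" "S m / n"] e1 e2
        by linarith
    qed
    also have "\<dots> \<le> B * (n+m) * m / (n * (n+m)) + B * m / n"
      by (intro add_mono divide_right_mono mult_right_mono) (use SB[of "n+m"] SB[of m] in auto)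
    also have "\<dots> = (2 * B * m) / n"
    proof -
      have "real n + real m \<noteq> 0" "real n \<noteq> 0" using n1 by auto
      then have "B * (n+m) * m / (n * (n+m)) = B * m / n"
        using nonzero_mult_divide_mult_cancel_right[of "real n + real m" "B * m" "real n"]
        by (simp add: ac_simps)
      then show ?thesis by (simp add: field_simps)
    qed
    finally show "\<bar>x n - z n\<bar> \<le> (2 * B * m) / n" .
  qed
  then have "liminf (\<lambda>n. ereal (x n)) = liminf (\<lambda>n. ereal (z n))" by (rule liminf_diff0)
  also have "\<dots> = liminf (\<lambda>n. ereal (S n / real n))"
    unfolding z_def using liminf_shift_k[of "\<lambda>n. ereal (S n / real n)" m] by simp
  finally show ?thesis by (simp add: avg_def x_def S_def Sh)
qed




lemma avg_cong_ev:
  fixes a b :: "nat \<Rightarrow> real"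
  assumes "\<And>n. \<bar>a n\<bar> \<le> B" "\<And>n. \<bar>b n\<bar> \<le> B" "\<And>n. n \<ge> N \<Longrightarrow> a n = b n"
  shows "avg a = avg b"
proof -
  have "avg a = avg (\<lambda>k. a (N + k))" using avg_shift[of a B N] assms(1) by simp
  also have "\<dots> = avg (\<lambda>k. b (N + k))" using assms(3) by simp
  also have "\<dots> = avg b" using avg_shift[of b B N] assms(2) by simp
  finally show ?thesis .
qed

lemma avg_zero: "avg (\<lambda>n. 0) = 0"
  by (simp add: avg_def Liminf_const zero_ereal_def)

lemma avg_minus: "avg (\<lambda>n. a n - c) = avg a - ereal c"
proof -
  have ev: "\<forall>\<^sub>F n in sequentially. ereal ((\<Sum>k<n. a k - c) / real n) = ereal ((\<Sum>k<n. a k) / real n) + ereal (- c)"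
    unfolding eventually_sequentially
    by (rule exI[of _ 1]) (auto simp: sum_subtractf diff_divide_distrib)
  have "avg (\<lambda>n. a n - c) = liminf (\<lambda>n. ereal ((\<Sum>k<n. a k) / real n) + ereal (- c))"
    unfolding avg_def by (rule Liminf_eq[OF ev])
  also have "\<dots> = avg a + ereal (- c)"
    unfolding avg_def by (rule Liminf_add_ereal_right) auto
  finally show ?thesis by (simp add: minus_ereal_def)
qed




fun vx :: "'v cstate \<Rightarrow> 'v" where
  "vx (PSt v M) = v" | "vx (CSt u v M) = u"
fun tgt :: "'v cstate \<Rightarrow> 'v" where
  "tgt (CSt u v M) = v" | "tgt (PSt v M) = v"
fun stM :: "'v cstate \<Rightarrow> 'v set" where
  "stM (PSt v M) = M" | "stM (CSt u v M) = M"
fun nxt :: "'v cstate \<Rightarrow> 'v \<Rightarrow> 'v cstate" where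
  "nxt (CSt u p M) w = (if w = p then PSt w (M \<union> {w}) else PSt w {w})"
| "nxt (PSt v M) w = PSt w {w}"

definition fj :: "('v \<Rightarrow> 'p) \<Rightarrow> ('p \<Rightarrow> 'v \<Rightarrow> 'v \<Rightarrow> real) \<Rightarrow> ('v \<Rightarrow> ereal) \<Rightarrow> 'p \<Rightarrow> 'v set \<Rightarrow> 'v \<Rightarrow> 'v \<Rightarrow> real" where
  "fj own wt lam j M u w = (let X = M \<inter> {x. own x = j} in
     if X = {} \<or> Max (lam ` X) = -\<infinity> then 0 else wt j u w - real_of_ereal (Max (lam ` X)))"

definition projP :: "'v cstate list \<Rightarrow> 'v list" where
  "projP H = map vx (filter is_P H)"

lemma ctrans_P: "ctrans E own i (PSt v M) s' \<Longrightarrow> \<exists>w. (v, w) \<in> E \<and> s' = CSt v w M"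
  by simp

lemma ctrans_C: "ctrans E own i (CSt u v M) s' \<Longrightarrow>
   s' = nxt (CSt u v M) (vx s') \<and> is_P s' \<and> (vx s' \<noteq> v \<longrightarrow> own u = i \<and> (u, vx s') \<in> E)"
  by auto

lemma chist_map: "chist tP tC s n = map (coutcome tP tC s) [0..<Suc n]"
proof (induction n)
  case 0 then show ?case by (simp add: coutcome_def)
next
  case (Suc n)
  have "chist tP tC s (Suc n) = chist tP tC s n @ [coutcome tP tC s (Suc n)]"
    by (simp add: coutcome_def Let_def)
  then show ?case using Suc by simp
qed

lemma coutcome_Suc: "coutcome tP tC s (Suc n) =
   (if is_P (coutcome tP tC s n) then tP (map (coutcome tP tC s) [0..<Suc n])
    else tC (map (coutcome tP tC s) [0..<Suc n]))"
proof -
  have "coutcome tP tC s (Suc n) = (let h = chist tP tC s n in if is_P (last h) then tP h else tC h)"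
    by (simp add: coutcome_def Let_def)
  then show ?thesis by (simp add: chist_map coutcome_def[symmetric] Let_def)
qed

locale play =
  fixes E :: "('v \<times> 'v) set" and own :: "'v \<Rightarrow> 'p" and i :: 'p
    and tP tC :: "'v cstate list \<Rightarrow> 'v cstate" and v0 :: 'v
  assumes P: "prover_strategy E own i tP" and C: "challenger_strategy E own i tC"
begin

definition "eta = coutcome tP tC (PSt v0 {v0})"
definition "rho n = vx (eta (2*n))"
definition "pp n = tgt (eta (Suc (2*n)))"
definition "MM n = stM (eta (2*n))"

lemma eta_Suc: "eta (Suc n) = (if is_P (eta n) then tP (map eta [0..<Suc n]) else tC (map eta [0..<Suc n]))"
  unfolding eta_def by (rule coutcome_Suc)

lemma eta0: "eta 0 = PSt v0 {v0}"
  by (simp add: eta_def coutcome_def)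

lemma P_step: "is_P (eta n) \<Longrightarrow> ctrans E own i (eta n) (eta (Suc n))"
  using P[unfolded prover_strategy_def, rule_format, of "map eta [0..<Suc n]"] eta_Suc[of n]
  by (simp del: upt_Suc add: upt_Suc_append)

lemma C_step: "\<not> is_P (eta n) \<Longrightarrow> ctrans E own i (eta n) (eta (Suc n))"
  using C[unfolded challenger_strategy_def, rule_format, of "map eta [0..<Suc n]"] eta_Suc[of n]
  by (simp del: upt_Suc add: upt_Suc_append)

lemma even_P: "is_P (eta (2*n))"
proof (induction n)
  case 0 then show ?case by (simp add: eta0)
next
  case (Suc n)
  obtain v M where e: "eta (2*n) = PSt v M" using Suc by (cases "eta (2*n)") auto
  have l1: "last (map eta [0..<Suc (2*n)]) = eta (2*n)" by simp
  have "ctrans E own i (eta (2*n)) (eta (Suc (2*n)))"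
    using P_step Suc by blast
  then obtain w where e1: "eta (Suc (2*n)) = CSt v w M" using e by auto
  have l2: "last (map eta [0..<Suc (Suc (2*n))]) = eta (Suc (2*n))" by simp
  have "ctrans E own i (eta (Suc (2*n))) (eta (Suc (Suc (2*n))))"
    using C_step[of "Suc (2*n)"] e1 by simp
  then show ?case using e1 by auto
qed

lemma struct:
  "eta (2*n) = PSt (rho n) (MM n) \<and> eta (Suc (2*n)) = CSt (rho n) (pp n) (MM n)
   \<and> (rho n, pp n) \<in> E \<and> eta (2 * Suc n) = nxt (eta (Suc (2*n))) (rho (Suc n))
   \<and> (rho (Suc n) \<noteq> pp n \<longrightarrow> own (rho n) = i \<and> (rho n, rho (Suc n)) \<in> E)"
proof -
  obtain v M where e: "eta (2*n) = PSt v M" using even_P[of n] by (cases "eta (2*n)") auto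
  have "ctrans E own i (eta (2*n)) (eta (Suc (2*n)))"
    using P_step even_P[of n] by blast
  then obtain w where e1: "eta (Suc (2*n)) = CSt v w M" and vw: "(v,w) \<in> E" using e by auto
  have "ctrans E own i (eta (Suc (2*n))) (eta (Suc (Suc (2*n))))"
    using C_step[of "Suc (2*n)"] e1 by simp
  then have c: "eta (Suc (Suc (2*n))) = nxt (CSt v w M) (vx (eta (Suc (Suc (2*n)))))
     \<and> (vx (eta (Suc (Suc (2*n)))) \<noteq> w \<longrightarrow> own v = i \<and> (v, vx (eta (Suc (Suc (2*n))))) \<in> E)"
    using e1 ctrans_C by metis
  have r: "rho (Suc n) = vx (eta (Suc (Suc (2*n))))" by (simp add: rho_def)
  show ?thesis using e e1 vw c r by (simp add: rho_def pp_def MM_def)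
qed

lemma rho0: "rho 0 = v0" and MM0: "MM 0 = {v0}"
  by (simp_all add: rho_def MM_def eta0)

lemma edge: "(rho n, rho (Suc n)) \<in> E"
  using struct[of n] by metis

lemma MM_Suc: "MM (Suc n) = (if rho (Suc n) = pp n then MM n \<union> {rho (Suc n)} else {rho (Suc n)})"
  using struct[of n] struct[of "Suc n"] by auto

lemma proj_even: "projP (map eta [0..<Suc (2*n)]) = map rho [0..<Suc n]"
proof (induction n)
  case 0 then show ?case by (simp add: projP_def eta0 rho0)
next
  case (Suc n)
  have "map eta [0..<Suc (2 * Suc n)] = map eta [0..<Suc (2*n)] @ [eta (Suc (2*n)), eta (2 * Suc n)]"
    by (simp add: numeral_2_eq_2)
  moreover have "\<not> is_P (eta (Suc (2*n)))" "eta (2 * Suc n) = PSt (rho (Suc n)) (MM (Suc n))"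
    using struct[of n] struct[of "Suc n"] by auto
  moreover have "is_P (eta (Suc (Suc (2*n))))" using even_P[of "Suc n"] by simp
  ultimately show ?case using Suc even_P[of n] by (simp add: projP_def rho_def)
qed

lemma proj_odd: "projP (map eta [0..<Suc (Suc (2*n))]) = map rho [0..<Suc n]"
proof -
  have "map eta [0..<Suc (Suc (2*n))] = map eta [0..<Suc (2*n)] @ [eta (Suc (2*n))]" by simp
  moreover have "\<not> is_P (eta (Suc (2*n)))" using struct[of n] by auto
  ultimately show ?thesis using proj_even[of n] by (simp del: upt_Suc add: projP_def)
qed

lemma tP_at: "eta (Suc (2*n)) = tP (map eta [0..<Suc (2*n)])"
  using eta_Suc[of "2*n"] even_P[of n] by simp

lemma tC_at: "eta (2 * Suc n) = tC (map eta [0..<Suc (Suc (2*n))])"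
  using eta_Suc[of "Suc (2*n)"] struct[of n] by simp

lemma dev_set: "{k. is_dev (eta k) (eta (Suc k))} = (\<lambda>n. Suc (2*n)) ` {n. rho (Suc n) \<noteq> pp n}"
proof -
  have ev: "\<not> is_dev (eta (2*n)) (eta (Suc (2*n)))" for n using struct[of n] by simp
  have od: "is_dev (eta (Suc (2*n))) (eta (Suc (Suc (2*n)))) = (rho (Suc n) \<noteq> pp n)" for n
    using struct[of n] struct[of "Suc n"] by simp
  show ?thesis
  proof (intro set_eqI iffI)
    fix k assume "k \<in> {k. is_dev (eta k) (eta (Suc k))}"
    then show "k \<in> (\<lambda>n. Suc (2*n)) ` {n. rho (Suc n) \<noteq> pp n}"
    proof (cases "even k")
      case True then obtain n where "k = 2*n" by auto
      then show ?thesis using ev \<open>k \<in> _\<close> by auto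
    next
      case False then have "k = Suc (2 * (k div 2))" by presburger
      then show ?thesis using od[of "k div 2"] \<open>k \<in> _\<close> by (metis (mono_tags, lifting) image_eqI mem_Collect_eq)
    qed
  next
    fix k assume "k \<in> (\<lambda>n. Suc (2*n)) ` {n. rho (Suc n) \<noteq> pp n}"
    then show "k \<in> {k. is_dev (eta k) (eta (Suc k))}" using od by auto
  qed
qed

lemma finite_dev: "finite {k. is_dev (eta k) (eta (Suc k))} \<longleftrightarrow> finite {n. rho (Suc n) \<noteq> pp n}"
  unfolding dev_set by (rule finite_image_iff) (auto simp: inj_on_def)


lemma MM_finite: "finite (MM n)"
  by (induction n) (simp_all add: MM0 MM_Suc)

lemma hat_even: "hatwt own wt lam i d (eta (2*n)) (eta (Suc (2*n))) = 0"
  using struct[of n] by (cases d) auto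

lemma hat_odd_None: "hatwt own wt lam i None (eta (Suc (2*n))) (eta (Suc (Suc (2*n)))) = 2 * wt i (rho n) (rho (Suc n))"
  using struct[of n] struct[of "Suc n"] by simp

lemma hat_odd_Some: "hatwt own wt lam i (Some j) (eta (Suc (2*n))) (eta (Suc (Suc (2*n)))) =
    2 * fj own wt lam j (MM n) (rho n) (rho (Suc n))"
  using struct[of n] struct[of "Suc n"] by (simp add: fj_def Let_def)

lemma fj_bound:
  assumes "\<And>j u w. \<bar>wt j u w\<bar> \<le> B" "\<And>v. \<bar>real_of_ereal (lam v)\<bar> \<le> L" "finite M"
  shows "\<bar>fj own wt lam j M u w\<bar> \<le> B + L"
proof -
  have L0: "L \<ge> 0" using assms(2)[of u] by linarith
  have B0: "B \<ge> 0" using assms(1)[of j u w] by linarith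
  show ?thesis
  proof (cases "M \<inter> {x. own x = j} = {} \<or> Max (lam ` (M \<inter> {x. own x = j})) = -\<infinity>")
    case True then show ?thesis using L0 B0 by (auto simp: fj_def Let_def)
  next
    case False
    then have "Max (lam ` (M \<inter> {x. own x = j})) \<in> lam ` (M \<inter> {x. own x = j})"
      using assms(3) by (intro Max_in) auto
    then obtain x where x: "Max (lam ` (M \<inter> {x. own x = j})) = lam x" by auto
    have "fj own wt lam j M u w = wt j u w - real_of_ereal (lam x)"
      using False x by (simp add: fj_def Let_def)
    then show ?thesis using assms(1)[of j u w] assms(2)[of x] by linarith
  qed
qed

lemma mean_None:
  assumes "\<And>j u w. \<bar>wt j u w\<bar> \<le> B"
  shows "mean_payoff (hatwt own wt lam i None) eta = mean_payoff (wt i) rho"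
  unfolding mean_payoff_avg
  by (rule avg_interleave[where B=B]) (use hat_even hat_odd_None assms in auto)

lemma mean_Some:
  assumes "\<And>j u w. \<bar>wt j u w\<bar> \<le> B" "\<And>v. \<bar>real_of_ereal (lam v)\<bar> \<le> L"
  shows "mean_payoff (hatwt own wt lam i (Some j)) eta = avg (\<lambda>n. fj own wt lam j (MM n) (rho n) (rho (Suc n)))"
  unfolding mean_payoff_avg
  by (rule avg_interleave[where B="B+L"]) (use hat_even hat_odd_Some fj_bound[OF assms MM_finite] in auto)

end

lemma stab_aux:
  fixes rho :: "nat \<Rightarrow> 'v"
  assumes "finite S" "S \<subseteq> rho ` {N0..}"
  shows "\<exists>N\<ge>N0. S \<subseteq> rho ` {N0..N}"
  using assms
proof (induction S rule: finite_induct)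
  case empty then show ?case by auto
next
  case (insert x S)
  then obtain N where N: "N \<ge> N0" "S \<subseteq> rho ` {N0..N}" by auto
  from insert obtain m where m: "m \<ge> N0" "x = rho m" by auto
  have "S \<subseteq> rho ` {N0..max N m}" using N(2) by (rule order_trans) (intro image_mono, auto)
  then have "insert x S \<subseteq> rho ` {N0..max N m}" using m by auto
  then show ?case using N by (intro exI[of _ "max N m"]) auto
qed

lemma ereal_sub_ge0: "y \<noteq> \<infinity> \<Longrightarrow> y \<noteq> -\<infinity> \<Longrightarrow> (0 \<le> x - y) = (y \<le> (x::ereal))"
  by (cases x; cases y) auto

lemma ereal_sub_lt0: "y \<noteq> \<infinity> \<Longrightarrow> y \<noteq> -\<infinity> \<Longrightarrow> (x - y < 0) = (x < (y::ereal))"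
  by (cases x; cases y) auto

context play begin

lemma HX:
  fixes j :: 'p
  assumes fin: "finite (UNIV :: 'v set)"
    and B: "\<And>j u w. \<bar>wt j u w\<bar> \<le> B" and L: "\<And>v. \<bar>real_of_ereal (lam v)\<bar> \<le> L"
    and ninf: "\<And>v. lam v \<noteq> \<infinity>"
    and MMh: "\<And>n. n \<ge> N0 \<Longrightarrow> MM n = rho ` {N0..n}"
  defines "U \<equiv> rho ` {N0..} \<inter> {x. own x = j}"
  shows "((U = {} \<or> Max (lam ` U) = -\<infinity>) \<and> avg (\<lambda>n. fj own wt lam j (MM n) (rho n) (rho (Suc n))) = 0)
     \<or> (U \<noteq> {} \<and> Max (lam ` U) \<noteq> -\<infinity> \<and> Max (lam ` U) \<noteq> \<infinity> \<and>
         avg (\<lambda>n. fj own wt lam j (MM n) (rho n) (rho (Suc n))) = mean_payoff (wt j) rho - Max (lam ` U))"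
proof -
  define F where "F n = fj own wt lam j (MM n) (rho n) (rho (Suc n))" for n
  have finU: "finite U" using fin by (rule finite_subset[rotated]) auto
  obtain N where N: "N \<ge> N0" "U \<subseteq> rho ` {N0..N}"
    using stab_aux[OF finU, of rho N0] unfolding U_def by auto
  have XU: "MM n \<inter> {x. own x = j} = U" if "n \<ge> N" for n
  proof -
    have "rho ` {N0..N} \<subseteq> rho ` {N0..n}" using that by auto
    then show ?thesis using MMh[of n] N that unfolding U_def by auto
  qed
  have FB: "\<bar>F n\<bar> \<le> B + L" for n unfolding F_def by (rule fj_bound[OF B L MM_finite])
  have B0: "B + L \<ge> 0" using FB[of 0] by linarith
  show ?thesis
  proof (cases "U = {} \<or> Max (lam ` U) = -\<infinity>")
    case True
    have "F n = 0" if "n \<ge> N" for n using True XU[OF that] by (auto simp: F_def fj_def Let_def)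
    then have "avg F = avg (\<lambda>n. 0)" by (intro avg_cong_ev[where B="B+L" and N=N]) (use FB B0 in auto)
    then show ?thesis using True by (simp add: avg_zero F_def[abs_def])
  next
    case False
    have Mi: "Max (lam ` U) \<in> lam ` U" using False finU by (intro Max_in) auto
    then have Mn: "Max (lam ` U) \<noteq> \<infinity>" using ninf by (metis imageE)
    define c where "c = real_of_ereal (Max (lam ` U))"
    have ce: "ereal c = Max (lam ` U)" using Mn False unfolding c_def by (cases "Max (lam ` U)") auto
    have "F n = wt j (rho n) (rho (Suc n)) - c" if "n \<ge> N" for n
      using False XU[OF that] by (auto simp: F_def fj_def Let_def c_def)
    then have "avg F = avg (\<lambda>n. wt j (rho n) (rho (Suc n)) - c)"
    proof (intro avg_cong_ev[where B="B+L+\<bar>c\<bar>" and N=N])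
      have L0: "L \<ge> 0" using L[of v0] by linarith
      show "\<bar>F n\<bar> \<le> B + L + \<bar>c\<bar>" for n using FB[of n] abs_ge_zero[of c] by linarith
      show "\<bar>wt j (rho n) (rho (Suc n)) - c\<bar> \<le> B + L + \<bar>c\<bar>" for n
        using B[of j "rho n" "rho (Suc n)"] L0 by linarith
    qed
    also have "\<dots> = mean_payoff (wt j) rho - ereal c" by (simp add: avg_minus mean_payoff_avg)
    finally show ?thesis using False Mn ce by (simp add: F_def[abs_def])
  qed
qed

end




lemma outcome_char:
  assumes "\<rho> 0 = v" "\<And>n. \<rho> (Suc n) = \<sigma> (own (\<rho> n)) (map \<rho> [0..<Suc n])"
  shows "outcome own \<sigma> v = \<rho>"
proof -
  have "hist own \<sigma> v n = map \<rho> [0..<Suc n]" for n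
    by (induction n) (simp_all add: assms Let_def)
  then show ?thesis by (auto simp: outcome_def)
qed

lemma follow_outcome:
  assumes r0: "\<rho> 0 = v0" and edges: "\<And>n. (\<rho> n, \<rho> (Suc n)) \<in> E"
    and fol: "\<And>n. own (\<rho> n) \<noteq> i \<Longrightarrow> \<rho> (Suc n) = \<sigma> (own (\<rho> n)) (map \<rho> [0..<Suc n])"
    and t0: "is_strategy E own i \<tau>0"
  defines "\<tau> \<equiv> (\<lambda>h. if h = map \<rho> [0..<length h] then \<rho> (length h) else \<tau>0 h)"
  shows "is_strategy E own i \<tau> \<and> outcome own (\<sigma>(i := \<tau>)) v0 = \<rho>"
proof
  show "is_strategy E own i \<tau>"
    unfolding is_strategy_def
  proof (intro allI impI)
    fix h assume h: "h \<noteq> [] \<and> own (last h) = i"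
    show "(last h, \<tau> h) \<in> E"
    proof (cases "h = map \<rho> [0..<length h]")
      case True
      then obtain k where k: "length h = Suc k" using h by (cases "length h") auto
      have "h = map \<rho> [0..<Suc k]" using True k by simp
      then have "last h = \<rho> k" by simp
      then show ?thesis using True k edges[of k] by (simp add: \<tau>_def)
    next
      case False then show ?thesis using t0 h by (simp add: \<tau>_def is_strategy_def)
    qed
  qed
  show "outcome own (\<sigma>(i := \<tau>)) v0 = \<rho>"
  proof (rule outcome_char)
    show "\<rho> 0 = v0" by (rule r0)
  next
    fix n
    show "\<rho> (Suc n) = (\<sigma>(i := \<tau>)) (own (\<rho> n)) (map \<rho> [0..<Suc n])"
      using fol[of n] by (cases "own (\<rho> n) = i") (simp_all add: \<tau>_def del: upt_Suc)
  qed
qed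

lemma last_projP: "H \<noteq> [] \<Longrightarrow> is_P (last H) \<Longrightarrow> projP H \<noteq> [] \<and> last (projP H) = vx (last H)"
proof -
  assume "H \<noteq> []" "is_P (last H)"
  then have "H = butlast H @ [last H]" by simp
  then have "filter is_P H = filter is_P (butlast H) @ [last H]"
    using \<open>is_P (last H)\<close> by (metis filter.simps filter_append)
  then show ?thesis by (simp add: projP_def)
qed

definition tPs :: "('v \<Rightarrow> 'p) \<Rightarrow> ('p \<Rightarrow> 'v list \<Rightarrow> 'v) \<Rightarrow> 'v cstate list \<Rightarrow> 'v cstate" where
  "tPs own \<sigma> H = (case last H of PSt u M \<Rightarrow> CSt u (\<sigma> (own u) (projP H)) M | CSt u p M \<Rightarrow> CSt u p M)"

lemma tPs_strat:
  fixes E :: "('v \<times> 'v) set" and own :: "'v \<Rightarrow> 'p"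
  assumes "\<And>j. is_strategy E own j (\<sigma> j)"
  shows "prover_strategy E own i (tPs own \<sigma>)"
  unfolding prover_strategy_def
proof (intro allI impI)
  fix H :: "'v cstate list" assume H: "H \<noteq> [] \<and> is_P (last H)"
  then obtain u M where l: "last H = PSt u M" by (cases "last H") auto
  have p: "projP H \<noteq> [] \<and> last (projP H) = u" using last_projP[of H] H l by simp
  have "(u, \<sigma> (own u) (projP H)) \<in> E"
    using assms[of "own u"] p unfolding is_strategy_def by metis
  then show "ctrans E own i (last H) (tPs own \<sigma> H)" using l by (simp add: tPs_def)
qed

fun ccr :: "('v cstate list \<Rightarrow> 'v cstate) \<Rightarrow> 'v \<Rightarrow> 'v list \<Rightarrow> 'v cstate list" where
  "ccr tP v [] = [PSt v {v}]"
| "ccr tP v (w # rs) = (let H = ccr tP v rs in H @ [tP H, nxt (tP H) w])"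

definition "cc tP h = ccr tP (hd h) (rev (tl h))"
definition "sigT tP j h = tgt (tP (cc tP h))"

lemma cc_snoc: "h \<noteq> [] \<Longrightarrow> cc tP (h @ [w]) = cc tP h @ [tP (cc tP h), nxt (tP (cc tP h)) w]"
  by (cases h) (simp_all add: cc_def Let_def)

lemma cc_single: "cc tP [v] = [PSt v {v}]"
  by (simp add: cc_def)

lemma nxt_P: "\<exists>M. nxt s w = PSt w M"
  by (cases s) auto

lemma cc_last: "h \<noteq> [] \<Longrightarrow> \<exists>M. last (cc tP h) = PSt (last h) M"
proof (induction h rule: rev_induct)
  case Nil then show ?case by simp
next
  case (snoc w h)
  show ?case
  proof (cases "h = []")
    case True then show ?thesis by (simp add: cc_single)
  next
    case False then show ?thesis using nxt_P by (simp add: cc_snoc)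
  qed
qed

lemma ccr_ne: "ccr tP v rs \<noteq> []"
  by (induction rs) (simp_all add: Let_def)

lemma cc_ne: "cc tP h \<noteq> []"
  by (simp add: cc_def ccr_ne)

lemma sigT_strat:
  fixes E :: "('v \<times> 'v) set" and own :: "'v \<Rightarrow> 'p"
  assumes "prover_strategy E own i tP"
  shows "is_strategy E own j (sigT tP j)"
  unfolding is_strategy_def
proof (intro allI impI)
  fix h assume h: "h \<noteq> [] \<and> own (last h) = j"
  obtain M where l: "last (cc tP h) = PSt (last h) M" using cc_last h by blast
  have "ctrans E own i (last (cc tP h)) (tP (cc tP h))"
    using assms[unfolded prover_strategy_def, rule_format, of "cc tP h"] cc_ne[of tP h] l by simp
  then show "(last h, sigT tP j h) \<in> E" using l by (auto simp: sigT_def)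
qed

definition tCt :: "('v \<times> 'v) set \<Rightarrow> ('v \<Rightarrow> 'p) \<Rightarrow> 'p \<Rightarrow> ('v list \<Rightarrow> 'v) \<Rightarrow> 'v cstate list \<Rightarrow> 'v cstate" where
  "tCt E own i \<tau> H = (case last H of
     CSt u p M \<Rightarrow> (if own u = i \<and> (u, \<tau> (projP H)) \<in> E \<and> \<tau> (projP H) \<noteq> p
                   then PSt (\<tau> (projP H)) {\<tau> (projP H)} else PSt p (M \<union> {p}))
   | PSt v M \<Rightarrow> PSt v M)"

lemma tCt_strat:
  fixes E :: "('v \<times> 'v) set" and own :: "'v \<Rightarrow> 'p"
  shows "challenger_strategy E own i (tCt E own i \<tau>)"
  unfolding challenger_strategy_def
proof (intro allI impI)
  fix H :: "'v cstate list" assume H: "H \<noteq> [] \<and> \<not> is_P (last H)"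
  then obtain u p M where l: "last H = CSt u p M" by (cases "last H") auto
  then show "ctrans E own i (last H) (tCt E own i \<tau> H)" by (auto simp: tCt_def)
qed

context play begin

abbreviation "pre n \<equiv> map rho [0..<Suc n]"

lemma nodev_noti: "own (rho n) \<noteq> i \<Longrightarrow> rho (Suc n) = pp n"
  using struct[of n] by blast

lemma last_map_upt: "last (map f [0..<Suc n]) = f n" by simp

lemma pp_tPs: "tP = tPs own \<sigma> \<Longrightarrow> pp n = \<sigma> (own (rho n)) (pre n)"
  using tP_at[of n] struct[of n] proj_even[of n] last_map_upt[of eta "2*n"]
  by (simp add: pp_def tPs_def del: upt_Suc)

lemma cc_play: "map eta [0..<Suc (2*n)] = cc tP (pre n)"
proof (induction n)
  case 0 then show ?case by (simp add: eta0 rho0 cc_single)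
next
  case (Suc n)
  have "map eta [0..<Suc (2 * Suc n)] = map eta [0..<Suc (2*n)] @ [eta (Suc (2*n)), eta (2 * Suc n)]"
    by (simp add: numeral_2_eq_2)
  also have "\<dots> = cc tP (pre n) @ [tP (cc tP (pre n)), nxt (tP (cc tP (pre n))) (rho (Suc n))]"
    using Suc struct[of n] tP_at[of n] by (simp del: upt_Suc)
  also have "\<dots> = cc tP (pre n @ [rho (Suc n)])" by (simp add: cc_snoc del: upt_Suc)
  finally show ?case by simp
qed

lemma pp_sigT: "pp n = sigT tP j (pre n)"
  using tP_at[of n] cc_play[of n] by (simp add: pp_def sigT_def del: upt_Suc)

lemma rho_tCt:
  assumes "tC = tCt E own i \<tau>" "is_strategy E own i \<tau>" "own (rho n) = i"
  shows "rho (Suc n) = \<tau> (pre n)"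
proof -
  have l: "last (map eta [0..<Suc (Suc (2*n))]) = CSt (rho n) (pp n) (MM n)"
    using struct[of n] by simp
  have pe: "pre n \<noteq> [] \<and> last (pre n) = rho n" by simp
  have e: "(rho n, \<tau> (pre n)) \<in> E" using assms(2,3) pe unfolding is_strategy_def by metis
  have "eta (2 * Suc n) = tCt E own i \<tau> (map eta [0..<Suc (Suc (2*n))])"
    using tC_at[of n] assms(1) by simp
  then have "eta (2 * Suc n) = (if \<tau> (pre n) \<noteq> pp n then PSt (\<tau> (pre n)) {\<tau> (pre n)} else PSt (pp n) (MM n \<union> {pp n}))"
    using l proj_odd[of n] assms(3) e by (simp add: tCt_def del: upt_Suc)
  then show ?thesis by (auto simp: rho_def split: if_splits)
qed

lemma lastdev:
  "(\<forall>n\<ge>N. rho (Suc n) = pp n) \<Longrightarrow>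
   \<exists>N0\<le>N. (\<forall>n\<ge>N0. rho (Suc n) = pp n) \<and> (\<forall>n\<ge>N0. MM n = rho ` {N0..n})"
proof (induction N)
  case 0
  have "MM n = rho ` {0..n}" for n
  proof (induction n)
    case 0 then show ?case by (simp add: MM0 rho0)
  next
    case (Suc n) then show ?case using MM_Suc[of n] 0 by (auto simp: atLeast0_atMost_Suc)
  qed
  then show ?case using 0 by auto
next
  case (Suc N)
  show ?case
  proof (cases "rho (Suc N) = pp N")
    case True
    then have "\<forall>n\<ge>N. rho (Suc n) = pp n" using Suc.prems by (metis le_antisym not_less_eq_eq)
    then show ?thesis using Suc.IH by (meson le_SucI)
  next
    case False
    have "MM n = rho ` {Suc N..n}" if "n \<ge> Suc N" for n
      using that
    proof (induction n rule: dec_induct)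
      case base then show ?case using MM_Suc[of N] False by simp
    next
      case (step n) then show ?case using MM_Suc[of n] Suc.prems
        by (auto simp: atLeastAtMostSuc_conv)
    qed
    then show ?thesis using Suc.prems by auto
  qed
qed

lemma fin_dev_N:
  assumes "finite {n. rho (Suc n) \<noteq> pp n}"
  shows "\<exists>N0. (\<forall>n\<ge>N0. rho (Suc n) = pp n) \<and> (\<forall>n\<ge>N0. MM n = rho ` {N0..n})"
proof -
  obtain k where "{n. rho (Suc n) \<noteq> pp n} \<subseteq> {..<k}" using assms finite_nat_bounded by blast
  then have "\<forall>n\<ge>k. rho (Suc n) = pp n" by auto
  then show ?thesis using lastdev by blast
qed

end




lemma shift_mean:
  assumes "\<And>j u w. \<bar>wt j u w\<bar> \<le> B"
  shows "mean_payoff (wt j) (\<lambda>k. \<rho> (m + k)) = mean_payoff (wt j) \<rho>"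
  unfolding mean_payoff_avg using avg_shift[of "\<lambda>k. wt j (\<rho> k) (\<rho> (Suc k))" B m] assms by simp

lemma hist_map:
  assumes "\<rho> 0 = v" "\<And>n. (\<rho> n, \<rho> (Suc n)) \<in> E"
  shows "is_history E v (map \<rho> [0..<Suc N])"
  unfolding is_history_def
proof (intro conjI allI impI)
  show "map \<rho> [0..<Suc N] \<noteq> []" by simp
  show "hd (map \<rho> [0..<Suc N]) = v" using assms(1) by (simp del: upt_Suc add: hd_map)
  fix k assume "Suc k < length (map \<rho> [0..<Suc N])"
  then show "(map \<rho> [0..<Suc N] ! k, map \<rho> [0..<Suc N] ! Suc k) \<in> E"
    using assms(2)[of k] by (simp del: upt_Suc add: nth_map nth_upt)
qed

lemma comp_map:
  assumes "\<And>n. own (\<rho> n) \<noteq> i \<Longrightarrow> \<rho> (Suc n) = \<sigma> (own (\<rho> n)) (map \<rho> [0..<Suc n])"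
  shows "compatible_minus own i \<sigma> (map \<rho> [0..<Suc N])"
  unfolding compatible_minus_def
proof (intro allI impI)
  fix k assume a: "Suc k < length (map \<rho> [0..<Suc N]) \<and> own (map \<rho> [0..<Suc N] ! k) \<noteq> i"
  then have k: "Suc k < Suc N" by simp
  have t: "take (Suc k) (map \<rho> [0..<Suc N]) = map \<rho> [0..<Suc k]"
    using k by (simp del: upt_Suc add: take_map take_upt)
  show "map \<rho> [0..<Suc N] ! Suc k = \<sigma> (own (map \<rho> [0..<Suc N] ! k)) (take (Suc k) (map \<rho> [0..<Suc N]))"
    using a k assms[of k] unfolding t by (simp del: upt_Suc add: nth_map nth_upt)
qed

lemma map_app_shift: "map \<rho> [0..<N] @ map (\<lambda>k. \<rho> (N + k)) [0..<m] = map \<rho> [0..<N + m]"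
  by (induction m) simp_all

lemma outcome_shift:
  assumes "\<And>n. n \<ge> N \<Longrightarrow> \<rho> (Suc n) = \<sigma> (own (\<rho> n)) (map \<rho> [0..<Suc n])"
  shows "outcome own (\<lambda>j h'. \<sigma> j (map \<rho> [0..<N] @ h')) (\<rho> N) = (\<lambda>k. \<rho> (N + k))"
proof (rule outcome_char)
  show "\<rho> (N + 0) = \<rho> N" by simp
next
  fix n
  have "map \<rho> [0..<N] @ map (\<lambda>k. \<rho> (N + k)) [0..<Suc n] = map \<rho> [0..<Suc (N + n)]"
    using map_app_shift[of \<rho> N "Suc n"] by simp
  then show "\<rho> (N + Suc n) = \<sigma> (own (\<rho> (N + n))) (map \<rho> [0..<N] @ map (\<lambda>k. \<rho> (N + k)) [0..<Suc n])"
    using assms[of "N + n"] by (simp del: upt_Suc)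
qed

context play begin

lemma HX_pos:
  fixes j :: 'p
  assumes fin: "finite (UNIV :: 'v set)"
    and B: "\<And>j u w. \<bar>wt j u w\<bar> \<le> B" and L: "\<And>v. \<bar>real_of_ereal (lam v)\<bar> \<le> L"
    and ninf: "\<And>v. lam v \<noteq> \<infinity>"
    and MMh: "\<And>n. n \<ge> N0 \<Longrightarrow> MM n = rho ` {N0..n}"
    and good: "\<And>m. m \<ge> N0 \<Longrightarrow> own (rho m) = j \<Longrightarrow> lam (rho m) \<le> mean_payoff (wt j) rho"
  shows "0 \<le> avg (\<lambda>n. fj own wt lam j (MM n) (rho n) (rho (Suc n)))"
proof -
  let ?U = "rho ` {N0..} \<inter> {x. own x = j}"
  have finU: "finite ?U" using fin by (rule finite_subset[rotated]) auto
  have H: "((?U = {} \<or> Max (lam ` ?U) = -\<infinity>) \<and> avg (\<lambda>n. fj own wt lam j (MM n) (rho n) (rho (Suc n))) = 0)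
     \<or> (?U \<noteq> {} \<and> Max (lam ` ?U) \<noteq> -\<infinity> \<and> Max (lam ` ?U) \<noteq> \<infinity> \<and>
         avg (\<lambda>n. fj own wt lam j (MM n) (rho n) (rho (Suc n))) = mean_payoff (wt j) rho - Max (lam ` ?U))"
    by (rule HX[OF fin B L ninf MMh])
  then show ?thesis
  proof
    assume "(?U = {} \<or> Max (lam ` ?U) = -\<infinity>) \<and> avg (\<lambda>n. fj own wt lam j (MM n) (rho n) (rho (Suc n))) = 0"
    then show ?thesis by simp
  next
    assume a: "?U \<noteq> {} \<and> Max (lam ` ?U) \<noteq> -\<infinity> \<and> Max (lam ` ?U) \<noteq> \<infinity> \<and>
         avg (\<lambda>n. fj own wt lam j (MM n) (rho n) (rho (Suc n))) = mean_payoff (wt j) rho - Max (lam ` ?U)"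
    have "Max (lam ` ?U) \<in> lam ` ?U" using a finU by (intro Max_in) auto
    then obtain m where m: "m \<ge> N0" "own (rho m) = j" "Max (lam ` ?U) = lam (rho m)" by auto
    then have "Max (lam ` ?U) \<le> mean_payoff (wt j) rho" using good by simp
    then show ?thesis using a ereal_sub_ge0[of "Max (lam ` ?U)" "mean_payoff (wt j) rho"] by simp
  qed
qed

lemma HX_neg:
  fixes j :: 'p
  assumes fin: "finite (UNIV :: 'v set)"
    and B: "\<And>j u w. \<bar>wt j u w\<bar> \<le> B" and L: "\<And>v. \<bar>real_of_ereal (lam v)\<bar> \<le> L"
    and ninf: "\<And>v. lam v \<noteq> \<infinity>"
    and MMh: "\<And>n. n \<ge> N0 \<Longrightarrow> MM n = rho ` {N0..n}"
    and m: "m \<ge> N0" "own (rho m) = j" "mean_payoff (wt j) rho < lam (rho m)"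
  shows "avg (\<lambda>n. fj own wt lam j (MM n) (rho n) (rho (Suc n))) < 0"
proof -
  let ?U = "rho ` {N0..} \<inter> {x. own x = j}"
  have finU: "finite ?U" using fin by (rule finite_subset[rotated]) auto
  have inU: "rho m \<in> ?U" using m by auto
  have le: "lam (rho m) \<le> Max (lam ` ?U)" using finU inU by (intro Max_ge) auto
  have H: "((?U = {} \<or> Max (lam ` ?U) = -\<infinity>) \<and> avg (\<lambda>n. fj own wt lam j (MM n) (rho n) (rho (Suc n))) = 0)
     \<or> (?U \<noteq> {} \<and> Max (lam ` ?U) \<noteq> -\<infinity> \<and> Max (lam ` ?U) \<noteq> \<infinity> \<and>
         avg (\<lambda>n. fj own wt lam j (MM n) (rho n) (rho (Suc n))) = mean_payoff (wt j) rho - Max (lam ` ?U))"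
    by (rule HX[OF fin B L ninf MMh])
  then show ?thesis
  proof
    assume a: "(?U = {} \<or> Max (lam ` ?U) = -\<infinity>) \<and> avg (\<lambda>n. fj own wt lam j (MM n) (rho n) (rho (Suc n))) = 0"
    then have "Max (lam ` ?U) = -\<infinity>" using inU by auto
    then show ?thesis using le m(3) by simp
  next
    assume a: "?U \<noteq> {} \<and> Max (lam ` ?U) \<noteq> -\<infinity> \<and> Max (lam ` ?U) \<noteq> \<infinity> \<and>
         avg (\<lambda>n. fj own wt lam j (MM n) (rho n) (rho (Suc n))) = mean_payoff (wt j) rho - Max (lam ` ?U)"
    have "mean_payoff (wt j) rho < Max (lam ` ?U)" using le m(3) by simp
    then show ?thesis using a ereal_sub_lt0[of "Max (lam ` ?U)" "mean_payoff (wt j) rho"] by simp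
  qed
qed

end




theorem theorem3:
  fixes E :: "('v::finite \<times> 'v) set" and own :: "'v \<Rightarrow> 'p::finite"
    and wt :: "'p \<Rightarrow> 'v \<Rightarrow> 'v \<Rightarrow> real" and lam :: "'v \<Rightarrow> ereal"
    and i :: 'p and v0 :: 'v
  assumes "\<forall>u. \<exists>w. (u, w) \<in> E"
    and "\<forall>j u w. (u, w) \<in> E \<longrightarrow> wt j u w \<in> \<rat>"
    and "(\<forall>v. lam v \<noteq> \<infinity> \<and> lam v \<noteq> -\<infinity>) \<or> lam = (\<lambda>_. -\<infinity>)"
  shows "(INF tP \<in> {t. prover_strategy E own i t}. SUP tC \<in> {t. challenger_strategy E own i t}.
            nuC own wt lam i (coutcome tP tC (PSt v0 {v0})))
       = (INF \<sigma> \<in> lamRat E own wt lam i v0. SUP \<tau> \<in> {t. is_strategy E own i t}.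
            mean_payoff (wt i) (outcome own (\<sigma>(i := \<tau>)) v0))"
proof -
  define B where "B = Max (range (\<lambda>(j,u,w). \<bar>wt j u w\<bar>))"
  have Bb: "\<bar>wt j u w\<bar> \<le> B" for j u w
    unfolding B_def by (rule Max_ge) (rule finite_imageI, simp, rule rev_image_eqI[of "(j,u,w)"], auto)
  define L where "L = Max (range (\<lambda>v. \<bar>real_of_ereal (lam v)\<bar>))"
  have Lb: "\<bar>real_of_ereal (lam v)\<bar> \<le> L" for v
    unfolding L_def by (rule Max_ge) (rule finite_imageI, simp, rule rev_image_eqI[of v], auto)
  have ninf: "lam v \<noteq> \<infinity>" for v using assms(3) by auto
  have fin: "finite (UNIV :: 'v set)" by simp
  show ?thesis
  proof (rule antisym)
    show "(INF tP \<in> {t. prover_strategy E own i t}. SUP tC \<in> {t. challenger_strategy E own i t}.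
            nuC own wt lam i (coutcome tP tC (PSt v0 {v0})))
       \<le> (INF \<sigma> \<in> lamRat E own wt lam i v0. SUP \<tau> \<in> {t. is_strategy E own i t}.
            mean_payoff (wt i) (outcome own (\<sigma>(i := \<tau>)) v0))"
    proof (rule INF_greatest)
      fix \<sigma> assume \<sigma>: "\<sigma> \<in> lamRat E own wt lam i v0"
      from \<sigma> obtain \<tau>0 where strj: "\<And>j. j \<noteq> i \<Longrightarrow> is_strategy E own j (\<sigma> j)"
        and t0: "is_strategy E own i \<tau>0"
        and cons: "\<And>h w. is_history E v0 (h @ [w]) \<and> compatible_minus own i \<sigma> (h @ [w]) \<Longrightarrow>
             lam_consistent own wt lam (outcome own (\<lambda>j h'. (\<sigma>(i := \<tau>0)) j (h @ h')) w)"
        unfolding lamRat_def by blast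
      define \<sigma>' where "\<sigma>' = \<sigma>(i := \<tau>0)"
      have str': "is_strategy E own j (\<sigma>' j)" for j using strj t0 by (simp add: \<sigma>'_def)
      define tP where "tP = tPs own \<sigma>'"
      have tPin: "prover_strategy E own i tP" unfolding tP_def by (rule tPs_strat[OF str'])
      have "(INF tP \<in> {t. prover_strategy E own i t}. SUP tC \<in> {t. challenger_strategy E own i t}.
            nuC own wt lam i (coutcome tP tC (PSt v0 {v0})))
          \<le> (SUP tC \<in> {t. challenger_strategy E own i t}. nuC own wt lam i (coutcome tP tC (PSt v0 {v0})))"
        by (rule INF_lower) (simp add: tPin)
      also have "\<dots> \<le> (SUP \<tau> \<in> {t. is_strategy E own i t}. mean_payoff (wt i) (outcome own (\<sigma>(i := \<tau>)) v0))"
      proof (rule SUP_least)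
        fix tC assume "tC \<in> {t. challenger_strategy E own i t}"
        then have tCs: "challenger_strategy E own i tC" by simp
        interpret pl: play E own i tP tC v0 using tPin tCs by unfold_locales
        have ppe: "pl.pp n = \<sigma>' (own (pl.rho n)) (map pl.rho [0..<Suc n])" for n
          using pl.pp_tPs tP_def by simp
        have fol: "pl.rho (Suc n) = \<sigma> (own (pl.rho n)) (map pl.rho [0..<Suc n])"
          if "own (pl.rho n) \<noteq> i" for n
          using pl.nodev_noti[OF that] ppe[of n] that by (simp add: \<sigma>'_def del: upt_Suc)
        obtain \<tau>r where \<tau>r: "is_strategy E own i \<tau>r" "outcome own (\<sigma>(i := \<tau>r)) v0 = pl.rho"
          using follow_outcome[of pl.rho v0 E own i \<sigma> \<tau>0, OF pl.rho0 pl.edge fol t0] by blast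
        have meanN: "mean_payoff (hatwt own wt lam i None) pl.eta = mean_payoff (wt i) pl.rho"
          by (rule pl.mean_None[OF Bb])
        have cond: "\<not> (finite {k. is_dev (pl.eta k) (pl.eta (Suc k))} \<and>
                      (\<exists>j. mean_payoff (hatwt own wt lam i (Some j)) pl.eta < 0))"
        proof
          assume a: "finite {k. is_dev (pl.eta k) (pl.eta (Suc k))} \<and>
                      (\<exists>j. mean_payoff (hatwt own wt lam i (Some j)) pl.eta < 0)"
          then obtain j where j: "mean_payoff (hatwt own wt lam i (Some j)) pl.eta < 0" by blast
          from a have "finite {n. pl.rho (Suc n) \<noteq> pl.pp n}" using pl.finite_dev by blast
          then obtain N0 where N0: "\<forall>n\<ge>N0. pl.rho (Suc n) = pl.pp n" "\<forall>n\<ge>N0. pl.MM n = pl.rho ` {N0..n}"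
            using pl.fin_dev_N by blast
          have hist: "is_history E v0 (map pl.rho [0..<N0] @ [pl.rho N0])"
            using hist_map[of pl.rho v0 E N0, OF pl.rho0 pl.edge] by simp
          have comp: "compatible_minus own i \<sigma> (map pl.rho [0..<N0] @ [pl.rho N0])"
            using comp_map[where \<rho>=pl.rho and i=i and \<sigma>=\<sigma> and own=own and N=N0, OF fol] by simp
          have oeq: "outcome own (\<lambda>j h'. (\<sigma>(i := \<tau>0)) j (map pl.rho [0..<N0] @ h')) (pl.rho N0)
                = (\<lambda>k. pl.rho (N0 + k))"
          proof (rule outcome_shift)
            fix n assume "n \<ge> N0"
            then show "pl.rho (Suc n) = (\<sigma>(i := \<tau>0)) (own (pl.rho n)) (map pl.rho [0..<Suc n])"
              using N0(1) ppe[of n] by (simp add: \<sigma>'_def del: upt_Suc)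
          qed
          have lc: "lam_consistent own wt lam (\<lambda>k. pl.rho (N0 + k))"
            using cons[OF conjI[OF hist comp]] oeq by simp
          have good: "lam (pl.rho m) \<le> mean_payoff (wt j) pl.rho"
            if m: "m \<ge> N0" "own (pl.rho m) = j" for m
          proof -
            have "lam (pl.rho (N0 + (m - N0))) \<le> mean_payoff (wt (own (pl.rho (N0 + (m - N0))))) (\<lambda>k. pl.rho (N0 + (m - N0) + k))"
              using lc unfolding lam_consistent_def by (simp add: add.assoc)
            then have "lam (pl.rho m) \<le> mean_payoff (wt j) (\<lambda>k. pl.rho (m + k))" using m by simp
            then show ?thesis using shift_mean[where wt=wt and j=j and \<rho>=pl.rho and m=m, OF Bb] by simp
          qed
          have "0 \<le> avg (\<lambda>n. fj own wt lam j (pl.MM n) (pl.rho n) (pl.rho (Suc n)))"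
            by (rule pl.HX_pos[OF fin Bb Lb ninf]) (use N0(2) good in auto)
          moreover have "mean_payoff (hatwt own wt lam i (Some j)) pl.eta
              = avg (\<lambda>n. fj own wt lam j (pl.MM n) (pl.rho n) (pl.rho (Suc n)))"
            by (rule pl.mean_Some[OF Bb Lb])
          ultimately show False using j by simp
        qed
        have "nuC own wt lam i (coutcome tP tC (PSt v0 {v0})) = mean_payoff (wt i) pl.rho"
          using cond meanN by (auto simp: nuC_def pl.eta_def)
        also have "\<dots> = mean_payoff (wt i) (outcome own (\<sigma>(i := \<tau>r)) v0)" using \<tau>r by simp
        also have "\<dots> \<le> (SUP \<tau> \<in> {t. is_strategy E own i t}. mean_payoff (wt i) (outcome own (\<sigma>(i := \<tau>)) v0))"
          by (rule SUP_upper) (simp add: \<tau>r)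
        finally show "nuC own wt lam i (coutcome tP tC (PSt v0 {v0})) \<le> \<dots>" .
      qed
      finally show "(INF tP \<in> {t. prover_strategy E own i t}. SUP tC \<in> {t. challenger_strategy E own i t}.
            nuC own wt lam i (coutcome tP tC (PSt v0 {v0})))
          \<le> (SUP \<tau> \<in> {t. is_strategy E own i t}. mean_payoff (wt i) (outcome own (\<sigma>(i := \<tau>)) v0))" .
    qed
  next
    show "(INF \<sigma> \<in> lamRat E own wt lam i v0. SUP \<tau> \<in> {t. is_strategy E own i t}.
            mean_payoff (wt i) (outcome own (\<sigma>(i := \<tau>)) v0))
       \<le> (INF tP \<in> {t. prover_strategy E own i t}. SUP tC \<in> {t. challenger_strategy E own i t}.
            nuC own wt lam i (coutcome tP tC (PSt v0 {v0})))"
    proof (rule INF_greatest)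
      fix tP assume "tP \<in> {t. prover_strategy E own i t}"
      then have tPs: "prover_strategy E own i tP" by simp
      define \<sigma>T :: "'p \<Rightarrow> 'v list \<Rightarrow> 'v" where "\<sigma>T = sigT tP"
      have strT: "is_strategy E own j (\<sigma>T j)" for j unfolding \<sigma>T_def by (rule sigT_strat[OF tPs])
      have follow: "play.rho tP (tCt E own i \<tau>) v0 (Suc n) =
          (\<sigma>T(i := \<tau>)) (own (play.rho tP (tCt E own i \<tau>) v0 n)) (map (play.rho tP (tCt E own i \<tau>) v0) [0..<Suc n])"
        if tau: "is_strategy E own i \<tau>" for \<tau> n
      proof -
        interpret pl: play E own i tP "tCt E own i \<tau>" v0 using tPs tCt_strat by unfold_locales
        show ?thesis
          using pl.rho_tCt[OF refl tau, of n] pl.nodev_noti[of n] pl.pp_sigT[of n "own (pl.rho n)"]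
          by (cases "own (pl.rho n) = i") (simp_all add: \<sigma>T_def del: upt_Suc)
      qed
      have K: "mean_payoff (wt i) (outcome own (\<sigma>T(i := \<tau>)) v0)
          \<le> nuC own wt lam i (coutcome tP (tCt E own i \<tau>) (PSt v0 {v0}))"
        if tau: "is_strategy E own i \<tau>" for \<tau>
      proof -
        interpret pl: play E own i tP "tCt E own i \<tau>" v0 using tPs tCt_strat by unfold_locales
        have "outcome own (\<sigma>T(i := \<tau>)) v0 = pl.rho"
          by (rule outcome_char[where \<rho>=pl.rho and v=v0 and own=own and \<sigma>="\<sigma>T(i := \<tau>)", OF pl.rho0 follow[OF tau]])
        moreover have "mean_payoff (hatwt own wt lam i None) pl.eta = mean_payoff (wt i) pl.rho"
          by (rule pl.mean_None[OF Bb])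
        moreover have "mean_payoff (hatwt own wt lam i None) pl.eta \<le> nuC own wt lam i pl.eta"
          by (simp add: nuC_def)
        ultimately show ?thesis by (simp add: pl.eta_def)
      qed
      show "(INF \<sigma> \<in> lamRat E own wt lam i v0. SUP \<tau> \<in> {t. is_strategy E own i t}.
            mean_payoff (wt i) (outcome own (\<sigma>(i := \<tau>)) v0))
          \<le> (SUP tC \<in> {t. challenger_strategy E own i t}. nuC own wt lam i (coutcome tP tC (PSt v0 {v0})))"
      proof (cases "\<sigma>T \<in> lamRat E own wt lam i v0")
        case True
        have "(INF \<sigma> \<in> lamRat E own wt lam i v0. SUP \<tau> \<in> {t. is_strategy E own i t}.
            mean_payoff (wt i) (outcome own (\<sigma>(i := \<tau>)) v0))
          \<le> (SUP \<tau> \<in> {t. is_strategy E own i t}. mean_payoff (wt i) (outcome own (\<sigma>T(i := \<tau>)) v0))"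
          by (rule INF_lower[OF True])
        also have "\<dots> \<le> (SUP tC \<in> {t. challenger_strategy E own i t}. nuC own wt lam i (coutcome tP tC (PSt v0 {v0})))"
        proof (rule SUP_least)
          fix \<tau> assume "\<tau> \<in> {t. is_strategy E own i t}"
          then have "mean_payoff (wt i) (outcome own (\<sigma>T(i := \<tau>)) v0)
              \<le> nuC own wt lam i (coutcome tP (tCt E own i \<tau>) (PSt v0 {v0}))" using K by simp
          also have "\<dots> \<le> (SUP tC \<in> {t. challenger_strategy E own i t}. nuC own wt lam i (coutcome tP tC (PSt v0 {v0})))"
            by (rule SUP_upper) (simp add: tCt_strat)
          finally show "mean_payoff (wt i) (outcome own (\<sigma>T(i := \<tau>)) v0) \<le> \<dots>" .
        qed
        finally show ?thesis .
      next
        case False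
        have "\<not> (\<forall>h w. is_history E v0 (h @ [w]) \<and> compatible_minus own i \<sigma>T (h @ [w]) \<longrightarrow>
            lam_consistent own wt lam (outcome own (\<lambda>j h'. (\<sigma>T(i := \<sigma>T i)) j (h @ h')) w))"
          using False strT unfolding lamRat_def by blast
        then obtain h w where hw0: "is_history E v0 (h @ [w])" "compatible_minus own i \<sigma>T (h @ [w])"
          and nc: "\<not> lam_consistent own wt lam (outcome own (\<lambda>j h'. \<sigma>T j (h @ h')) w)"
          by auto
        define hw where "hw = h @ [w]"
        define N0 where "N0 = length h"
        have lhw: "length hw = Suc N0" by (simp add: hw_def N0_def)
        have hwh: "is_history E v0 hw" "compatible_minus own i \<sigma>T hw" using hw0 by (simp_all add: hw_def)
        define \<tau> where "\<tau> = (\<lambda>h'. if length h' < length hw \<and> h' = take (length h') hw then hw ! length h' else \<sigma>T i h')"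
        have tau: "is_strategy E own i \<tau>"
          unfolding is_strategy_def
        proof (intro allI impI)
          fix h' :: "'v list" assume a: "h' \<noteq> [] \<and> own (last h') = i"
          show "(last h', \<tau> h') \<in> E"
          proof (cases "length h' < length hw \<and> h' = take (length h') hw")
            case True
            then obtain k where k: "length h' = Suc k" using a by (cases "length h'") auto
            have "last h' = hw ! k" using True k by (metis last_conv_nth a diff_Suc_1 nth_take lessI)
            moreover have "(hw ! k, hw ! Suc k) \<in> E" using hwh(1) True k unfolding is_history_def by auto
            ultimately show ?thesis using True k by (simp add: \<tau>_def)
          next
            case False then show ?thesis using strT[of i] a unfolding \<tau>_def is_strategy_def by auto
          qed
        qed
        interpret pl: play E own i tP "tCt E own i \<tau>" v0 using tPs tCt_strat by unfold_locales
        have fl: "pl.rho (Suc n) = (\<sigma>T(i := \<tau>)) (own (pl.rho n)) (map pl.rho [0..<Suc n])" for n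
          by (rule follow[OF tau])
        have hw0v: "hw ! 0 = v0" using hwh(1) unfolding is_history_def by (metis hd_conv_nth)
        have A: "k \<le> N0 \<Longrightarrow> map pl.rho [0..<Suc k] = take (Suc k) hw" for k
        proof (induction k)
          case 0
          have "take (Suc 0) hw = [hw ! 0]" using lhw by (simp add: take_Suc_conv_app_nth)
          then show ?case using hw0v pl.rho0 by simp
        next
          case (Suc k)
          then have IH: "map pl.rho [0..<Suc k] = take (Suc k) hw" by simp
          have sk: "Suc k < length hw" using Suc.prems lhw by simp
          have rk: "pl.rho k = hw ! k"
            using arg_cong[OF IH, of "\<lambda>l. l ! k"] sk by (simp del: upt_Suc add: nth_map nth_upt)
          have "pl.rho (Suc k) = hw ! Suc k"
          proof (cases "own (pl.rho k) = i")
            case True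
            then show ?thesis using fl[of k] IH sk by (simp del: upt_Suc add: \<tau>_def)
          next
            case False
            then have "pl.rho (Suc k) = \<sigma>T (own (hw ! k)) (take (Suc k) hw)"
              using fl[of k] IH rk by (simp del: upt_Suc)
            also have "\<dots> = hw ! Suc k"
              using hwh(2) sk False rk unfolding compatible_minus_def by metis
            finally show ?thesis .
          qed
          then have rs: "pl.rho (Suc k) = hw ! Suc k" .
          have "map pl.rho [0..<Suc (Suc k)] = map pl.rho [0..<Suc k] @ [pl.rho (Suc k)]" by simp
          also have "\<dots> = take (Suc k) hw @ [hw ! Suc k]" by (simp only: IH rs)
          also have "\<dots> = take (Suc (Suc k)) hw" using sk by (simp only: take_Suc_conv_app_nth)
          finally show ?case .
        qed
        have AN: "map pl.rho [0..<Suc N0] = hw" using A[of N0] lhw by simp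
        then have hr: "map pl.rho [0..<N0] = h" and wr: "pl.rho N0 = w"
          by (simp_all add: hw_def)
        have Bf: "pl.rho (Suc n) = \<sigma>T (own (pl.rho n)) (map pl.rho [0..<Suc n])" if "n \<ge> N0" for n
          using fl[of n] that lhw by (cases "own (pl.rho n) = i") (simp_all del: upt_Suc add: \<tau>_def)
        have nd: "\<forall>n\<ge>N0. pl.rho (Suc n) = pl.pp n"
        proof (intro allI impI)
          fix n assume "n \<ge> N0"
          then show "pl.rho (Suc n) = pl.pp n"
            using Bf[of n] pl.pp_sigT[of n "own (pl.rho n)"] by (simp add: \<sigma>T_def del: upt_Suc)
        qed
        obtain N1 where N1: "N1 \<le> N0" "\<forall>n\<ge>N1. pl.rho (Suc n) = pl.pp n" "\<forall>n\<ge>N1. pl.MM n = pl.rho ` {N1..n}"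
          using pl.lastdev[OF nd] by blast
        have fdev: "finite {k. is_dev (pl.eta k) (pl.eta (Suc k))}"
        proof -
          have "{n. pl.rho (Suc n) \<noteq> pl.pp n} \<subseteq> {..<N0}" using nd not_less by blast
          then show ?thesis using pl.finite_dev finite_subset by blast
        qed
        have oeq: "outcome own (\<lambda>j h'. \<sigma>T j (h @ h')) w = (\<lambda>k. pl.rho (N0 + k))"
          using outcome_shift[where \<rho>=pl.rho and N=N0 and \<sigma>=\<sigma>T and own=own, OF Bf] hr wr by simp
        then obtain n where n: "\<not> lam (pl.rho (N0 + n)) \<le> mean_payoff (wt (own (pl.rho (N0 + n)))) (\<lambda>k. pl.rho (N0 + n + k))"
          using nc unfolding lam_consistent_def by (auto simp: add.assoc)
        define m where "m = N0 + n"
        define j where "j = own (pl.rho m)"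
        have lt: "mean_payoff (wt j) pl.rho < lam (pl.rho m)"
          using n shift_mean[where wt=wt and j=j and \<rho>=pl.rho and m=m, OF Bb]
          by (simp add: m_def j_def not_le)
        have "avg (\<lambda>n. fj own wt lam j (pl.MM n) (pl.rho n) (pl.rho (Suc n))) < 0"
        proof -
          have MMh: "\<And>n. n \<ge> N1 \<Longrightarrow> pl.MM n = pl.rho ` {N1..n}" using N1(3) by blast
          have mN: "N1 \<le> m" using N1(1) by (simp add: m_def)
          have oj: "own (pl.rho m) = j" by (simp add: j_def)
          show ?thesis by (rule pl.HX_neg[where wt=wt and lam=lam and j=j, OF fin Bb Lb ninf MMh mN oj lt])
        qed
        moreover have "mean_payoff (hatwt own wt lam i (Some j)) pl.eta
            = avg (\<lambda>n. fj own wt lam j (pl.MM n) (pl.rho n) (pl.rho (Suc n)))"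
          by (rule pl.mean_Some[OF Bb Lb])
        ultimately have "nuC own wt lam i pl.eta = \<infinity>" using fdev unfolding nuC_def by (metis (no_types, lifting))
        then have "\<infinity> \<le> (SUP tC \<in> {t. challenger_strategy E own i t}. nuC own wt lam i (coutcome tP tC (PSt v0 {v0})))"
          using SUP_upper[of "tCt E own i \<tau>" "{t. challenger_strategy E own i t}"
              "\<lambda>tC. nuC own wt lam i (coutcome tP tC (PSt v0 {v0}))"] tCt_strat[of E own i \<tau>]
          by (simp add: pl.eta_def)
        then show ?thesis by simp
      qed
    qed
  qed
qed


end
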